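(* Let $\mu$ be a joint distribution of a triple $(X,A,Y)$ with $X\in\mathcal{X}\subseteq\mathbb{R}^d$, $A\in\{0,1\}$ with $\Pr(A=0),\Pr(A=1)>0$, and $Y\in[-1,1]$. Let $h:\mathcal{X}\to\mathbb{R}$ be measurable and $\widehat{Y}=h(X)$. If $\widehat{Y}$ is statistically independent of $A$, then for every $p\geq1$, $$\varepsilon_{p,\mu}(\widehat{Y})\geq H_{0\text{-}1}(A)\cdot W_p(Y_\sharp\mu_0,Y_\sharp\mu_1).$$
   Context: For $a\in\{0,1\}$, $\mu_a$ is the conditional distribution of $(X,Y)$ given $A=a$. For a distribution $\nu$, $\varepsilon_{p,\nu}(\widehat{Y}):=\left(\mathbb{E}_\nu[|\widehat{Y}-Y|^p]\right)^{1/p}$ (for $\nu=\mu$ this is the error over the whole population). $H_{0\text{-}1}(A):=1-\max_{a\in\{0,1\}}\Pr(A=a)$ is the zero-one entropy of $A$. $Y_\sharp\mu_a$ is the distribution of $Y$ under $\mu_a$ and $W_p$ is the $p$-Wasserstein distance on $\mathbb{R}$. *)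

theory Defs
  imports "HOL-Probability.Probability"
begin

definition root_enn :: "real \<Rightarrow> ennreal \<Rightarrow> ereal" where
  "root_enn p I = (if I = \<infinity> then \<infinity> else ereal (enn2real I powr (1 / p)))"

definition lp_error :: "real \<Rightarrow> 'a measure \<Rightarrow> ('a \<Rightarrow> real) \<Rightarrow> ('a \<Rightarrow> real) \<Rightarrow> ereal" where
  "lp_error p M Yhat Y = root_enn p (\<integral>\<^sup>+ \<omega>. ennreal (\<bar>Yhat \<omega> - Y \<omega>\<bar> powr p) \<partial>M)"

definition couplings :: "real measure \<Rightarrow> real measure \<Rightarrow> (real \<times> real) measure set" where
  "couplings \<mu> \<nu> = {\<pi>. prob_space \<pi> \<and> sets \<pi> = sets (borel \<Otimes>\<^sub>M borel) \<and>
      distr \<pi> borel fst = \<mu> \<and> distr \<pi> borel snd = \<nu>}"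

definition wasserstein :: "real \<Rightarrow> real measure \<Rightarrow> real measure \<Rightarrow> ereal" where
  "wasserstein p \<mu> \<nu> = root_enn p
     (INF \<pi>\<in>couplings \<mu> \<nu>. \<integral>\<^sup>+ z. ennreal (\<bar>fst z - snd z\<bar> powr p) \<partial>\<pi>)"

text \<open>Conditional distribution of Y given A = a (the push-forward Y_# mu_a).\<close>
definition cond_distr :: "'a measure \<Rightarrow> ('a \<Rightarrow> 'b) \<Rightarrow> 'b \<Rightarrow> ('a \<Rightarrow> real) \<Rightarrow> real measure" where
  "cond_distr M A a Y = distr (uniform_measure M {\<omega>\<in>space M. A \<omega> = a}) borel Y"

definition H01 :: "'a measure \<Rightarrow> ('a \<Rightarrow> real) \<Rightarrow> real" where
  "H01 M A = 1 - max (measure M {\<omega>\<in>space M. A \<omega> = 0}) (measure M {\<omega>\<in>space M. A \<omega> = 1})"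

end

theory Submission
  imports Defs
begin


lemma glue_coupling:
  fixes M :: "'a measure" and A Y :: "'a \<Rightarrow> real" and g :: "'a \<Rightarrow> int"
  assumes P: "prob_space M"
    and Am[measurable]: "A \<in> borel_measurable M"
    and Ym[measurable]: "Y \<in> borel_measurable M"
    and gm[measurable]: "g \<in> measurable M (count_space UNIV)"
    and pos: "\<And>a. a \<in> {0,1} \<Longrightarrow> measure M {x\<in>space M. A x = a} > 0"
    and ind: "\<And>z a. a \<in> {0,1} \<Longrightarrow> measure M {x\<in>space M. g x = z \<and> A x = a}
               = measure M {x\<in>space M. g x = z} * measure M {x\<in>space M. A x = a}"
    and c0m[measurable]: "c0 \<in> borel_measurable M" and c1m[measurable]: "c1 \<in> borel_measurable M"
    and bnd: "\<And>x x'. x \<in> space M \<Longrightarrow> x' \<in> space M \<Longrightarrow> g x = g x' \<Longrightarrow>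
               ennreal (\<bar>Y x - Y x'\<bar> powr p) \<le> c0 x + c1 x'"
  shows "\<exists>\<pi>\<in>couplings (cond_distr M A 0 Y) (cond_distr M A 1 Y).
           (\<integral>\<^sup>+z. ennreal (\<bar>fst z - snd z\<bar> powr p) \<partial>\<pi>)
           \<le> (\<integral>\<^sup>+x. c0 x \<partial>uniform_measure M {x\<in>space M. A x = 0})
             + (\<integral>\<^sup>+x. c1 x \<partial>uniform_measure M {x\<in>space M. A x = 1})"
proof -
  interpret prob_space M by fact
  define S where "S a = {x\<in>space M. A x = a}" for a
  define Ma where "Ma a = uniform_measure M (S a)" for a
  define w where "w z = ennreal (1 / measure M {x\<in>space M. g x = z})" for z
  define f where "f xx = (if g (fst xx) = g (snd xx) then w (g (fst xx)) else 0)" for xx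
  have S[measurable]: "S a \<in> sets M" for a unfolding S_def by measurable
  have sMa[simp]: "sets (Ma a) = sets M" "space (Ma a) = space M" for a unfolding Ma_def by auto
  have Mprob: "prob_space (Ma a)" if "a \<in> {0,1}" for a
    unfolding Ma_def using pos[OF that] by (intro prob_space_uniform_measure) (auto simp: S_def emeasure_eq_measure)
  have gr[measurable]: "(\<lambda>x. real_of_int (g x)) \<in> borel_measurable M" by measurable
  have "f \<in> borel_measurable (M \<Otimes>\<^sub>M M)"
  proof -
    have "f = (\<lambda>xx. if real_of_int (g (fst xx)) = real_of_int (g (snd xx)) then w (g (fst xx)) else 0)"
      unfolding f_def by auto
    also have "\<dots> \<in> borel_measurable (M \<Otimes>\<^sub>M M)" by measurable
    finally show ?thesis .
  qed
  then have fm: "f \<in> borel_measurable (Ma a \<Otimes>\<^sub>M Ma b)" for a b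
    by (subst measurable_cong_sets[OF sets_pair_measure_cong[OF sMa(1) sMa(1)] refl]) 
  have tr: "h \<in> borel_measurable (Ma a \<Otimes>\<^sub>M Ma b)" if "h \<in> borel_measurable (M \<Otimes>\<^sub>M M)" for h :: "_ \<Rightarrow> ennreal" and a b
    by (subst measurable_cong_sets[OF sets_pair_measure_cong[OF sMa(1) sMa(1)] refl]) (fact that)
  define G where "G z = {x\<in>space M. g x = z}" for z
  have G[measurable]: "G z \<in> sets M" for z unfolding G_def by measurable
  have K1: "emeasure (Ma a) (G z) = ennreal (measure M (G z))" if a: "a \<in> {0,1}" for a z
  proof -
    have "S a \<inter> G z = {x\<in>space M. g x = z \<and> A x = a}" unfolding S_def G_def by auto
    then have "emeasure (Ma a) (G z) = ennreal (measure M (G z) * measure M (S a)) / ennreal (measure M (S a))"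
      unfolding Ma_def using ind[OF a, of z]
      by (simp add: emeasure_eq_measure G_def S_def)
    also have "\<dots> = ennreal (measure M (G z))"
      using pos[OF a] by (simp add: divide_ennreal S_def)
    finally show ?thesis .
  qed
  have K2: "AE x in M. measure M (G (g x)) \<noteq> 0"
  proof -
    have "AE x in M. g x = z \<longrightarrow> measure M (G z) \<noteq> 0" for z
    proof (cases "measure M (G z) = 0")
      case True
      then have "G z \<in> null_sets M" by (simp add: emeasure_eq_measure null_sets_def)
      from AE_not_in[OF this] AE_space show ?thesis by eventually_elim (auto simp: G_def)
    qed simp
    then have "AE x in M. \<forall>z. g x = z \<longrightarrow> measure M (G z) \<noteq> 0" by (intro AE_all_countable[THEN iffD2] allI)
    then show ?thesis by eventually_elim auto
  qed
  have K2': "AE x in Ma a. measure M (G (g x)) \<noteq> 0" for a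
    unfolding Ma_def using K2 by (intro AE_uniform_measureI) auto
  have K3: "(\<integral>\<^sup>+x'. f (x,x') \<partial>Ma 1) = 1" if "x \<in> space M" "measure M (G (g x)) \<noteq> 0" for x
  proof -
    have "(\<integral>\<^sup>+x'. f (x,x') \<partial>Ma 1) = (\<integral>\<^sup>+x'. w (g x) * indicator (G (g x)) x' \<partial>Ma 1)"
      by (intro nn_integral_cong) (auto simp: f_def G_def split: split_indicator)
    also have "\<dots> = w (g x) * ennreal (measure M (G (g x)))"
      by (subst nn_integral_cmult_indicator) (auto simp: K1)
    also have "\<dots> = 1" using that by (simp add: w_def G_def ennreal_mult''[symmetric])
    finally show ?thesis .
  qed
  have K3': "(\<integral>\<^sup>+x. f (x,x') \<partial>Ma 0) = 1" if "x' \<in> space M" "measure M (G (g x')) \<noteq> 0" for x'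
  proof -
    have "(\<integral>\<^sup>+x. f (x,x') \<partial>Ma 0) = (\<integral>\<^sup>+x. w (g x') * indicator (G (g x')) x \<partial>Ma 0)"
      by (intro nn_integral_cong) (auto simp: f_def G_def split: split_indicator)
    also have "\<dots> = w (g x') * ennreal (measure M (G (g x')))"
      by (subst nn_integral_cmult_indicator) (auto simp: K1)
    also have "\<dots> = 1" using that by (simp add: w_def G_def ennreal_mult''[symmetric])
    finally show ?thesis .
  qed
  interpret M0: prob_space "Ma 0" by (rule Mprob) simp
  interpret M1: prob_space "Ma 1" by (rule Mprob) simp
  interpret M01: pair_sigma_finite "Ma 0" "Ma 1" ..
  have fMM[measurable]: "f \<in> borel_measurable (M \<Otimes>\<^sub>M M)" by fact
  have fsec1: "(\<lambda>x'. f (x,x')) \<in> borel_measurable (Ma a)" if "x \<in> space M" for x a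
    by (subst measurable_cong_sets[OF sMa(1) refl]) (rule measurable_compose[OF measurable_Pair1'[OF that] fMM])
  have fsec2: "(\<lambda>x. f (x,x')) \<in> borel_measurable (Ma a)" if "x' \<in> space M" for x' a
    by (subst measurable_cong_sets[OF sMa(1) refl]) (rule measurable_compose[OF measurable_Pair2'[OF that] fMM])
  have marg1: "(\<integral>\<^sup>+xx. f xx * \<phi> (fst xx) \<partial>(Ma 0 \<Otimes>\<^sub>M Ma 1)) = (\<integral>\<^sup>+x. \<phi> x \<partial>Ma 0)"
    if [measurable]: "\<phi> \<in> borel_measurable M" for \<phi>
  proof -
    have "(\<integral>\<^sup>+xx. f xx * \<phi> (fst xx) \<partial>(Ma 0 \<Otimes>\<^sub>M Ma 1)) = (\<integral>\<^sup>+x. \<integral>\<^sup>+x'. f (x,x') * \<phi> x \<partial>Ma 1 \<partial>Ma 0)"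
      by (subst M1.nn_integral_fst[symmetric]) (auto intro!: tr)
    also have "\<dots> = (\<integral>\<^sup>+x. (\<integral>\<^sup>+x'. f (x,x') \<partial>Ma 1) * \<phi> x \<partial>Ma 0)"
      by (intro nn_integral_cong nn_integral_multc) (auto intro!: fsec1)
    also have "\<dots> = (\<integral>\<^sup>+x. \<phi> x \<partial>Ma 0)"
      using K2'[of 0] by (intro nn_integral_cong_AE) (auto simp: K3)
    finally show ?thesis .
  qed
  have marg2: "(\<integral>\<^sup>+xx. f xx * \<psi> (snd xx) \<partial>(Ma 0 \<Otimes>\<^sub>M Ma 1)) = (\<integral>\<^sup>+x. \<psi> x \<partial>Ma 1)"
    if [measurable]: "\<psi> \<in> borel_measurable M" for \<psi>
  proof -
    have "(\<integral>\<^sup>+xx. f xx * \<psi> (snd xx) \<partial>(Ma 0 \<Otimes>\<^sub>M Ma 1)) = (\<integral>\<^sup>+x'. \<integral>\<^sup>+x. f (x,x') * \<psi> x' \<partial>Ma 0 \<partial>Ma 1)"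
      by (subst M01.nn_integral_snd[symmetric]) (auto intro!: tr)
    also have "\<dots> = (\<integral>\<^sup>+x'. (\<integral>\<^sup>+x. f (x,x') \<partial>Ma 0) * \<psi> x' \<partial>Ma 1)"
      by (intro nn_integral_cong nn_integral_multc) (auto intro!: fsec2)
    also have "\<dots> = (\<integral>\<^sup>+x. \<psi> x \<partial>Ma 1)"
      using K2'[of 1] by (intro nn_integral_cong_AE) (auto simp: K3')
    finally show ?thesis .
  qed
  define \<rho> where "\<rho> = density (Ma 0 \<Otimes>\<^sub>M Ma 1) f"
  define T where "T xx = (Y (fst xx), Y (snd xx))" for xx
  define \<pi> where "\<pi> = distr \<rho> borel T"
  have fm01: "f \<in> borel_measurable (Ma 0 \<Otimes>\<^sub>M Ma 1)" by (rule tr) fact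
  have sp\<rho>: "space \<rho> = space M \<times> space M" and ss\<rho>: "sets \<rho> = sets (Ma 0 \<Otimes>\<^sub>M Ma 1)"
    unfolding \<rho>_def by (auto simp: space_pair_measure)
  have TMM: "T \<in> measurable (M \<Otimes>\<^sub>M M) borel"
    unfolding T_def borel_prod[symmetric] by measurable
  have Tm: "T \<in> measurable \<rho> borel"
    by (subst measurable_cong_sets[OF ss\<rho> refl], subst measurable_cong_sets[OF sets_pair_measure_cong[OF sMa(1) sMa(1)] refl]) (fact TMM)
  have emr: "emeasure \<rho> (T -` B \<inter> space \<rho>) = (\<integral>\<^sup>+xx. f xx * indicator B (T xx) \<partial>(Ma 0 \<Otimes>\<^sub>M Ma 1))"
    if "B \<in> sets borel" for B
  proof -
    have "T -` B \<inter> space \<rho> \<in> sets \<rho>" using Tm that by (rule measurable_sets)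
    then show ?thesis unfolding \<rho>_def
      by (subst emeasure_density) (auto simp: fm01 space_pair_measure \<rho>_def intro!: nn_integral_cong split: split_indicator)
  qed
  have "emeasure \<rho> (space \<rho>) = 1"
  proof -
    have "emeasure \<rho> (space \<rho>) = emeasure \<rho> (T -` UNIV \<inter> space \<rho>)" by simp
    also have "\<dots> = (\<integral>\<^sup>+xx. f xx * (\<lambda>_. 1) (fst xx) \<partial>(Ma 0 \<Otimes>\<^sub>M Ma 1))"
      by (subst emr) auto
    also have "\<dots> = (\<integral>\<^sup>+x. 1 \<partial>Ma 0)" by (rule marg1) simp
    also have "\<dots> = 1" using M0.emeasure_space_1 by simp
    finally show ?thesis .
  qed
  then interpret R: prob_space \<rho> by (rule prob_spaceI)
  have Pi: "prob_space \<pi>" unfolding \<pi>_def by (rule R.prob_space_distr[OF Tm])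
  have fstm: "fst \<in> measurable (borel :: (real \<times> real) measure) borel"
    using measurable_fst[of "borel :: real measure" "borel :: real measure"] by (simp add: borel_prod)
  have sndm: "snd \<in> measurable (borel :: (real \<times> real) measure) borel"
    using measurable_snd[of "borel :: real measure" "borel :: real measure"] by (simp add: borel_prod)
  have YMa: "Y \<in> borel_measurable (Ma a)" for a by (subst measurable_cong_sets[OF sMa(1) refl]) fact
  have BU: "B \<times> (UNIV::real set) \<in> sets (borel::(real\<times>real) measure)" "(UNIV::real set) \<times> B \<in> sets (borel::(real\<times>real) measure)"
    if "B \<in> sets borel" for B :: "real set"
    using that by (subst borel_prod[symmetric], auto intro: pair_measureI)+
  have m1: "distr \<pi> borel fst = cond_distr M A 0 Y"
  proof -
    have "distr \<pi> borel fst = distr \<rho> borel (fst \<circ> T)" unfolding \<pi>_def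
      by (rule distr_distr[OF fstm Tm])
    also have "\<dots> = distr (Ma 0) borel Y"
    proof (rule measure_eqI)
      fix B :: "real set" assume B: "B \<in> sets (distr \<rho> borel (fst \<circ> T))"
      then have B': "B \<in> sets borel" by simp
      have "emeasure (distr \<rho> borel (fst \<circ> T)) B = emeasure \<rho> (T -` (B \<times> UNIV) \<inter> space \<rho>)"
        using B' by (subst emeasure_distr) (auto intro!: measurable_comp[OF Tm fstm] arg_cong[where f="emeasure \<rho>"] simp: T_def)
      also have "\<dots> = (\<integral>\<^sup>+xx. f xx * (\<lambda>x. indicator B (Y x)) (fst xx) \<partial>(Ma 0 \<Otimes>\<^sub>M Ma 1))"
        using B' by (subst emr) (auto simp: T_def BU split: split_indicator intro!: nn_integral_cong)
      also have "\<dots> = (\<integral>\<^sup>+x. indicator B (Y x) \<partial>Ma 0)" by (intro marg1 measurable_compose[OF Ym borel_measurable_indicator[OF B']])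
      also have "\<dots> = emeasure (distr (Ma 0) borel Y) B"
      proof -
        have Ys: "Y -` B \<inter> space (Ma 0) \<in> sets (Ma 0)" using YMa B' by (rule measurable_sets)
        have "(\<integral>\<^sup>+x. indicator B (Y x) \<partial>Ma 0) = (\<integral>\<^sup>+x. indicator (Y -` B \<inter> space (Ma 0)) x \<partial>Ma 0)"
          by (intro nn_integral_cong) (auto split: split_indicator)
        also have "\<dots> = emeasure (Ma 0) (Y -` B \<inter> space (Ma 0))" using Ys by (rule nn_integral_indicator)
        also have "\<dots> = emeasure (distr (Ma 0) borel Y) B" by (rule emeasure_distr[OF YMa B', symmetric])
        finally show ?thesis .
      qed
      finally show "emeasure (distr \<rho> borel (fst \<circ> T)) B = emeasure (distr (Ma 0) borel Y) B" .
    qed simp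
    finally show ?thesis unfolding cond_distr_def Ma_def S_def .
  qed
  have m2: "distr \<pi> borel snd = cond_distr M A 1 Y"
  proof -
    have "distr \<pi> borel snd = distr \<rho> borel (snd \<circ> T)" unfolding \<pi>_def
      by (rule distr_distr[OF sndm Tm])
    also have "\<dots> = distr (Ma 1) borel Y"
    proof (rule measure_eqI)
      fix B :: "real set" assume B: "B \<in> sets (distr \<rho> borel (snd \<circ> T))"
      then have B': "B \<in> sets borel" by simp
      have "emeasure (distr \<rho> borel (snd \<circ> T)) B = emeasure \<rho> (T -` (UNIV \<times> B) \<inter> space \<rho>)"
        using B' by (subst emeasure_distr) (auto intro!: measurable_comp[OF Tm sndm] arg_cong[where f="emeasure \<rho>"] simp: T_def)
      also have "\<dots> = (\<integral>\<^sup>+xx. f xx * (\<lambda>x. indicator B (Y x)) (snd xx) \<partial>(Ma 0 \<Otimes>\<^sub>M Ma 1))"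
        using B' by (subst emr) (auto simp: T_def BU split: split_indicator intro!: nn_integral_cong)
      also have "\<dots> = (\<integral>\<^sup>+x. indicator B (Y x) \<partial>Ma 1)" by (intro marg2 measurable_compose[OF Ym borel_measurable_indicator[OF B']])
      also have "\<dots> = emeasure (distr (Ma 1) borel Y) B"
      proof -
        have Ys: "Y -` B \<inter> space (Ma 1) \<in> sets (Ma 1)" using YMa B' by (rule measurable_sets)
        have "(\<integral>\<^sup>+x. indicator B (Y x) \<partial>Ma 1) = (\<integral>\<^sup>+x. indicator (Y -` B \<inter> space (Ma 1)) x \<partial>Ma 1)"
          by (intro nn_integral_cong) (auto split: split_indicator)
        also have "\<dots> = emeasure (Ma 1) (Y -` B \<inter> space (Ma 1))" using Ys by (rule nn_integral_indicator)
        also have "\<dots> = emeasure (distr (Ma 1) borel Y) B" by (rule emeasure_distr[OF YMa B', symmetric])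
        finally show ?thesis .
      qed
      finally show "emeasure (distr \<rho> borel (snd \<circ> T)) B = emeasure (distr (Ma 1) borel Y) B" .
    qed simp
    finally show ?thesis unfolding cond_distr_def Ma_def S_def .
  qed
  have hm: "(\<lambda>z::real\<times>real. ennreal (\<bar>fst z - snd z\<bar> powr p)) \<in> borel_measurable borel"
    by (subst borel_prod[symmetric]) measurable
  have cost: "(\<integral>\<^sup>+z. ennreal (\<bar>fst z - snd z\<bar> powr p) \<partial>\<pi>) \<le> (\<integral>\<^sup>+x. c0 x \<partial>Ma 0) + (\<integral>\<^sup>+x. c1 x \<partial>Ma 1)"
  proof -
    have "(\<integral>\<^sup>+z. ennreal (\<bar>fst z - snd z\<bar> powr p) \<partial>\<pi>) = (\<integral>\<^sup>+xx. ennreal (\<bar>Y (fst xx) - Y (snd xx)\<bar> powr p) \<partial>\<rho>)"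
      unfolding \<pi>_def by (subst nn_integral_distr[OF Tm]) (simp_all add: T_def hm)
    also have "\<dots> = (\<integral>\<^sup>+xx. f xx * ennreal (\<bar>Y (fst xx) - Y (snd xx)\<bar> powr p) \<partial>(Ma 0 \<Otimes>\<^sub>M Ma 1))"
      unfolding \<rho>_def by (rule nn_integral_density[OF fm01]) (rule tr, measurable)
    also have "\<dots> \<le> (\<integral>\<^sup>+xx. f xx * c0 (fst xx) + f xx * c1 (snd xx) \<partial>(Ma 0 \<Otimes>\<^sub>M Ma 1))"
    proof (intro nn_integral_mono)
      fix xx assume "xx \<in> space (Ma 0 \<Otimes>\<^sub>M Ma 1)"
      then have xx: "fst xx \<in> space M" "snd xx \<in> space M" by (auto simp: space_pair_measure)
      show "f xx * ennreal (\<bar>Y (fst xx) - Y (snd xx)\<bar> powr p) \<le> f xx * c0 (fst xx) + f xx * c1 (snd xx)"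
      proof (cases "g (fst xx) = g (snd xx)")
        case True
        then have "f xx * ennreal (\<bar>Y (fst xx) - Y (snd xx)\<bar> powr p) \<le> f xx * (c0 (fst xx) + c1 (snd xx))"
          using bnd[OF xx] by (intro mult_left_mono) auto
        then show ?thesis by (simp add: distrib_left)
      qed (simp add: f_def)
    qed
    also have "\<dots> = (\<integral>\<^sup>+xx. f xx * c0 (fst xx) \<partial>(Ma 0 \<Otimes>\<^sub>M Ma 1)) + (\<integral>\<^sup>+xx. f xx * c1 (snd xx) \<partial>(Ma 0 \<Otimes>\<^sub>M Ma 1))"
      by (rule nn_integral_add; rule tr; measurable)
    also have "\<dots> = (\<integral>\<^sup>+x. c0 x \<partial>Ma 0) + (\<integral>\<^sup>+x. c1 x \<partial>Ma 1)"
      by (simp add: marg1 marg2)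
    finally show ?thesis .
  qed
  have sp: "sets \<pi> = sets (borel \<Otimes>\<^sub>M borel)"
    unfolding \<pi>_def sets_distr using borel_prod[where ?'a=real and ?'b=real] by (rule sym[THEN arg_cong[where f=sets]])
  have "\<pi> \<in> couplings (cond_distr M A 0 Y) (cond_distr M A 1 Y)"
    unfolding couplings_def using Pi m1 m2 sp by simp
  with cost show ?thesis unfolding Ma_def S_def by blast
qed

lemma conv_split:
  fixes a b l p :: real
  assumes a: "a \<ge> 0" and b: "b \<ge> 0" and l: "0 < l" "l < 1" and p: "p \<ge> 1"
  shows "(a+b) powr p \<le> l powr (1-p) * a powr p + (1-l) powr (1-p) * b powr p"
proof -
  have ge1: "x powr (1-p) \<ge> 1" if "0 < x" "x \<le> 1" for x :: real
  proof -
    have h1: "x powr (p-1) \<le> 1" using that p by (intro powr_le1) auto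
    have h2: "x powr (p-1) > 0" using that by simp
    have "x powr (1-p) = 1 / x powr (p-1)" using powr_minus_divide[of x "p-1"] by simp
    then show ?thesis using h1 h2 by simp
  qed
  have l1: "l powr (1-p) \<ge> 1" using l by (intro ge1) auto
  have l2: "(1-l) powr (1-p) \<ge> 1" using l by (intro ge1) auto
  show ?thesis
  proof (cases "a = 0 \<or> b = 0")
    case True
    then show ?thesis
    proof
      assume "a = 0" then show ?thesis using mult_right_mono[OF l2, of "b powr p"] by simp
    next
      assume "b = 0" then show ?thesis using mult_right_mono[OF l1, of "a powr p"] by simp
    qed
  next
    case False
    then have ap: "a > 0" and bp: "b > 0" using a b by auto
    have c: "convex_on {0<..} (\<lambda>x::real. x powr p)" by (rule powr_convex) fact
    have "((1-(1-l)) * (a/l) + (1-l) * (b/(1-l))) powr p \<le> (1-(1-l)) * (a/l) powr p + (1-l) * (b/(1-l)) powr p"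
      using convex_onD[OF c, of "1-l" "a/l" "b/(1-l)"] l ap bp by simp
    moreover have "(1-(1-l)) * (a/l) + (1-l) * (b/(1-l)) = a + b" using l by simp
    moreover have "l * (a/l) powr p = l powr (1-p) * a powr p"
      using l ap by (simp add: powr_divide powr_diff)
    moreover have "(1-l) * (b/(1-l)) powr p = (1-l) powr (1-p) * b powr p"
      using l bp by (simp add: powr_divide powr_diff)
    ultimately show ?thesis by simp
  qed
qed

lemma e0: "(1/2::real) powr (1-p) = 2 powr (p-1)"
proof -
  have "(1/2::real) powr (1-p) = 1 / 2 powr (1-p)" by (rule powr_divide[of 1 2, simplified])
  also have "\<dots> = 2 powr (-(1-p))" by (rule powr_minus_divide[symmetric])
  finally show ?thesis by simp
qed
lemma t1: fixes H p :: real assumes H: "0 < H" "2*H \<le> 1" and p: "p \<ge> 1"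
  shows "H powr p * (1/2) powr (1-p) \<le> H"
proof -
  have e1: "H powr p = H * H powr (p-1)" using powr_add[of H 1 "p-1"] H by simp
  have e2: "(2*H) powr (p-1) = 2 powr (p-1) * H powr (p-1)" using H by (simp add: powr_mult)
  have e3: "(2*H) powr (p-1) \<le> 1" using H p by (intro powr_le1) auto
  have "H powr p * (1/2) powr (1-p) = H * (2*H) powr (p-1)" unfolding e1 e2 e0 by (simp only: ac_simps)
  also have "\<dots> \<le> H * 1" using e3 H by (intro mult_left_mono) auto
  finally show ?thesis by simp
qed
lemma t2: fixes t p :: real assumes t: "0 < t" "t < 1" and p: "p \<ge> 1"
  shows "t powr (1-p) * (t^2) powr p \<le> t"
proof -
  have "(t^2) powr p = (t powr 2) powr p" using t by (simp add: powr_realpow)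
  also have "\<dots> = t powr (2*p)" by (simp add: powr_powr)
  finally have a: "(t^2) powr p = t powr (2*p)" .
  have "t powr (1-p) * (t^2) powr p = t powr (1+p)" unfolding a powr_add[symmetric] by (simp add: add.commute)
  also have "\<dots> \<le> t powr 1" using t p by (intro powr_mono') auto
  finally show ?thesis using t by simp
qed
lemma t3: fixes K L r t :: real assumes "K \<ge> 0" "L \<ge> 0" "r \<ge> 0" "t \<ge> 0"
  shows "ennreal (K * (L * r + t)) = ennreal K * (ennreal L * ennreal r + ennreal t)"
  using assms by (simp add: ennreal_mult ennreal_plus[symmetric])
theorem corollary2:
  fixes M :: "'a measure"
    and \<X> :: "(real ^ 'd) set"
    and X :: "'a \<Rightarrow> real ^ 'd"
    and A :: "'a \<Rightarrow> real"
    and Y :: "'a \<Rightarrow> real"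
    and h :: "real ^ 'd \<Rightarrow> real"
    and p :: real
  assumes "prob_space M"
    and "X \<in> measurable M (restrict_space borel \<X>)"
    and "A \<in> borel_measurable M"
    and "\<And>\<omega>. \<omega> \<in> space M \<Longrightarrow> A \<omega> \<in> {0, 1}"
    and "measure M {\<omega>\<in>space M. A \<omega> = 0} > 0"
    and "measure M {\<omega>\<in>space M. A \<omega> = 1} > 0"
    and "Y \<in> borel_measurable M"
    and "\<And>\<omega>. \<omega> \<in> space M \<Longrightarrow> Y \<omega> \<in> {-1..1}"
    and "h \<in> borel_measurable (restrict_space borel \<X>)"
    and "prob_space.indep_var M borel (\<lambda>\<omega>. h (X \<omega>)) borel A"
    and "p \<ge> 1"
  shows "lp_error p M (\<lambda>\<omega>. h (X \<omega>)) Y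
           \<ge> ereal (H01 M A) * wasserstein p (cond_distr M A 0 Y) (cond_distr M A 1 Y)"
proof -
  interpret prob_space M by fact
  note [measurable] = assms(3) assms(7)
  define Yh where "Yh \<omega> = h (X \<omega>)" for \<omega>
  have Yhm[measurable]: "Yh \<in> borel_measurable M"
    unfolding Yh_def by (rule measurable_compose[OF assms(2) assms(9)])
  have indY: "indep_var borel Yh borel A" using assms(10) unfolding Yh_def[abs_def] .
  define S where "S a = {x\<in>space M. A x = a}" for a :: real
  have S[measurable]: "S a \<in> sets M" for a unfolding S_def by measurable
  define q0 where "q0 = prob (S 0)"
  define q1 where "q1 = prob (S 1)"
  have q0p: "q0 > 0" and q1p: "q1 > 0" using assms(5,6) by (simp_all add: q0_def q1_def S_def)
  have qsum: "q0 + q1 = 1"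
  proof -
    have u: "S 0 \<union> S 1 = space M" using assms(4) by (auto simp: S_def)
    have d: "S 0 \<inter> S 1 = {}" by (auto simp: S_def)
    have "prob (S 0 \<union> S 1) = prob (S 0) + prob (S 1)" using d by (intro finite_measure_Union) auto
    then have "prob (S 0) + prob (S 1) = prob (space M)" using u by simp
    then show ?thesis by (simp add: q0_def q1_def prob_space)
  qed
  define H where "H = H01 M A"
  have "H = 1 - max q0 q1" by (simp add: H_def H01_def q0_def q1_def S_def)
  then have Hmin: "H = min q0 q1" using qsum by (auto simp: max_def min_def)
  have Hpos: "H > 0" and H0: "H \<le> q0" and H1: "H \<le> q1" and H2: "2*H \<le> 1"
    using Hmin q0p q1p qsum by auto
  define \<phi> where "\<phi> x = ennreal (\<bar>Yh x - Y x\<bar> powr p)" for x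
  have \<phi>m[measurable]: "\<phi> \<in> borel_measurable M" unfolding \<phi>_def by measurable
  define I where "I = (\<integral>\<^sup>+x. \<phi> x \<partial>M)"
  define Ma where "Ma a = uniform_measure M (S a)" for a
  define Ea where "Ea a = (\<integral>\<^sup>+x. \<phi> x \<partial>Ma a)" for a
  define C where "C = (INF \<pi>\<in>couplings (cond_distr M A 0 Y) (cond_distr M A 1 Y). \<integral>\<^sup>+ z. ennreal (\<bar>fst z - snd z\<bar> powr p) \<partial>\<pi>)"
  have lhs: "lp_error p M (\<lambda>\<omega>. h (X \<omega>)) Y = root_enn p I"
    unfolding lp_error_def I_def \<phi>_def Yh_def ..
  have rhs: "wasserstein p (cond_distr M A 0 Y) (cond_distr M A 1 Y) = root_enn p C"
    unfolding wasserstein_def C_def ..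
  have sMa: "sets (Ma a) = sets M" for a by (simp add: Ma_def)
  have Mprob: "prob_space (Ma a)" if "a \<in> {0,1}" for a
    unfolding Ma_def using that q0p q1p
    by (intro prob_space_uniform_measure) (auto simp: q0_def q1_def emeasure_eq_measure)
  have intc: "(\<integral>\<^sup>+x. ennreal (K * (L * \<bar>Yh x - Y x\<bar> powr p + t)) \<partial>Ma a) = ennreal K * (ennreal L * Ea a + ennreal t)"
    if "a \<in> {0,1}" "K \<ge> 0" "L \<ge> 0" "t \<ge> 0" for a K L t
  proof -
    interpret Pa: prob_space "Ma a" using Mprob[OF that(1)] .
    have m[measurable]: "\<phi> \<in> borel_measurable (Ma a)" by (subst measurable_cong_sets[OF sMa refl]) (fact \<phi>m)
    have "(\<integral>\<^sup>+x. ennreal (K * (L * \<bar>Yh x - Y x\<bar> powr p + t)) \<partial>Ma a) = (\<integral>\<^sup>+x. ennreal K * (ennreal L * \<phi> x + ennreal t) \<partial>Ma a)"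
      using that by (intro nn_integral_cong) (simp add: t3 \<phi>_def)
    also have "\<dots> = ennreal K * (\<integral>\<^sup>+x. ennreal L * \<phi> x + ennreal t \<partial>Ma a)"
      by (rule nn_integral_cmult) measurable
    also have "(\<integral>\<^sup>+x. ennreal L * \<phi> x + ennreal t \<partial>Ma a) = ennreal L * Ea a + ennreal t"
      using Pa.emeasure_space_1 by (simp add: nn_integral_add nn_integral_cmult Ea_def)
    finally show ?thesis by simp
  qed
  have bound: "C \<le> ennreal ((1/2) powr (1-p)) * (ennreal ((1-t) powr (1-p)) * Ea 0 + ennreal t)
                 + ennreal ((1/2) powr (1-p)) * (ennreal ((1-t) powr (1-p)) * Ea 1 + ennreal t)"
    if t: "0 < t" "t < 1" for t
  proof -
    define K where "K = (1/2::real) powr (1-p)"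
    define L where "L = (1-t) powr (1-p)"
    define g where "g x = \<lfloor>Yh x / t^2\<rfloor>" for x
    have gm[measurable]: "g \<in> measurable M (count_space UNIV)" unfolding g_def by measurable
    define qf where "qf x = L * \<bar>Yh x - Y x\<bar> powr p + t" for x
    define c where "c x = ennreal (K * qf x)" for x
    have cm[measurable]: "c \<in> borel_measurable M" unfolding c_def qf_def by measurable
    have ind: "measure M {x\<in>space M. g x = z \<and> A x = a} = measure M {x\<in>space M. g x = z} * measure M {x\<in>space M. A x = a}"
      if "a \<in> {0,1}" for z a
    proof -
      have B: "{y::real. \<lfloor>y / t^2\<rfloor> = z} \<in> sets borel" by measurable
      from prob_indep_random_variable[OF indY B, of "{a}"] show ?thesis by (simp add: g_def)
    qed
    have pos: "measure M {x\<in>space M. A x = a} > 0" if "a \<in> {0,1}" for a using that assms(5,6) by auto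
    have dx: "\<bar>Y x - t^2 * g x\<bar> powr p \<le> qf x" for x
    proof -
      have t2p: "t^2 > 0" using t by simp
      have fl: "t^2 * g x \<le> Yh x" "Yh x < t^2 * g x + t^2"
      proof -
        have "real_of_int (g x) \<le> Yh x / t^2" "Yh x / t^2 < real_of_int (g x) + 1" unfolding g_def by linarith+
        then show "t^2 * g x \<le> Yh x" "Yh x < t^2 * g x + t^2" using t2p by (auto simp: field_simps)
      qed
      have "\<bar>Y x - t^2 * g x\<bar> \<le> \<bar>Yh x - Y x\<bar> + t^2" using fl by linarith
      then have "\<bar>Y x - t^2 * g x\<bar> powr p \<le> (\<bar>Yh x - Y x\<bar> + t^2) powr p" using assms(11) by (intro powr_mono2) auto
      also have "\<dots> \<le> (1-t) powr (1-p) * \<bar>Yh x - Y x\<bar> powr p + (1-(1-t)) powr (1-p) * (t^2) powr p"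
        using t assms(11) by (intro conv_split) auto
      finally have A1: "\<bar>Y x - t^2 * g x\<bar> powr p \<le> (1-t) powr (1-p) * \<bar>Yh x - Y x\<bar> powr p + t powr (1-p) * (t^2) powr p" by simp
      show ?thesis using A1 t2[OF t assms(11)] unfolding qf_def L_def by linarith
    qed
    have hh: "1 - 1/2 = (1/2::real)" by simp
    have Kn: "K \<ge> 0" unfolding K_def by simp
    have qfn: "qf x \<ge> 0" for x unfolding qf_def L_def using t by simp
    have bnd: "ennreal (\<bar>Y x - Y x'\<bar> powr p) \<le> c x + c x'" if "x \<in> space M" "x' \<in> space M" "g x = g x'" for x x'
    proof -
      have e: "Y x - Y x' = (Y x - t^2 * g x) - (Y x' - t^2 * g x')" using that(3) by simp
      have "\<bar>Y x - Y x'\<bar> \<le> \<bar>Y x - t^2 * g x\<bar> + \<bar>Y x' - t^2 * g x'\<bar>"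
        unfolding e by (rule abs_triangle_ineq4)
      then have "\<bar>Y x - Y x'\<bar> powr p \<le> (\<bar>Y x - t^2 * g x\<bar> + \<bar>Y x' - t^2 * g x'\<bar>) powr p"
        using assms(11) by (intro powr_mono2) auto
      also have "\<dots> \<le> (1/2) powr (1-p) * \<bar>Y x - t^2 * g x\<bar> powr p + (1 - 1/2) powr (1-p) * \<bar>Y x' - t^2 * g x'\<bar> powr p"
        by (rule conv_split) (use assms(11) in auto)
      also have "\<dots> = K * \<bar>Y x - t^2 * g x\<bar> powr p + K * \<bar>Y x' - t^2 * g x'\<bar> powr p"
        unfolding K_def by (simp only: hh)
      also have "\<dots> \<le> K * qf x + K * qf x'"
        by (rule add_mono; rule mult_left_mono[OF dx Kn])
      finally have le: "\<bar>Y x - Y x'\<bar> powr p \<le> K * qf x + K * qf x'" .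
      have "ennreal (\<bar>Y x - Y x'\<bar> powr p) \<le> ennreal (K * qf x + K * qf x')" using le by (rule ennreal_leI)
      also have "\<dots> = c x + c x'" unfolding c_def using Kn qfn by (intro ennreal_plus) auto
      finally show ?thesis .
    qed
    from glue_coupling[OF prob_space_axioms assms(3) assms(7) gm pos ind cm cm bnd]
    obtain \<pi> where \<pi>: "\<pi> \<in> couplings (cond_distr M A 0 Y) (cond_distr M A 1 Y)"
      and cost: "(\<integral>\<^sup>+z. ennreal (\<bar>fst z - snd z\<bar> powr p) \<partial>\<pi>) \<le> (\<integral>\<^sup>+x. c x \<partial>Ma 0) + (\<integral>\<^sup>+x. c x \<partial>Ma 1)"
      unfolding Ma_def S_def by blast
    have KL: "K \<ge> 0" "L \<ge> 0" unfolding K_def L_def by auto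
    have c0: "(\<integral>\<^sup>+x. c x \<partial>Ma 0) = ennreal K * (ennreal L * Ea 0 + ennreal t)"
      unfolding c_def qf_def using KL t by (intro intc) auto
    have c1: "(\<integral>\<^sup>+x. c x \<partial>Ma 1) = ennreal K * (ennreal L * Ea 1 + ennreal t)"
      unfolding c_def qf_def using KL t by (intro intc) auto
    have "C \<le> (\<integral>\<^sup>+z. ennreal (\<bar>fst z - snd z\<bar> powr p) \<partial>\<pi>)" unfolding C_def by (rule INF_lower) (fact \<pi>)
    also note cost
    finally show ?thesis unfolding c0 c1 K_def L_def .
  qed
  show ?thesis
  proof (cases "I = \<infinity>")
    case True
    then show ?thesis unfolding lhs by (simp add: root_enn_def)
  next
    case False
    define Ia where "Ia a = (\<integral>\<^sup>+x. \<phi> x * indicator (S a) x \<partial>M)" for a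
    have Isplit: "I = Ia 0 + Ia 1"
    proof -
      have "I = (\<integral>\<^sup>+x. \<phi> x * indicator (S 0) x + \<phi> x * indicator (S 1) x \<partial>M)"
        unfolding I_def using assms(4) by (intro nn_integral_cong) (auto simp: S_def split: split_indicator)
      also have "\<dots> = Ia 0 + Ia 1" unfolding Ia_def by (rule nn_integral_add) measurable
      finally show ?thesis .
    qed
    have Iafin: "Ia a \<noteq> \<infinity>" if "a \<in> {0,1}" for a using False Isplit that by auto
    define ia where "ia a = enn2real (Ia a)" for a
    have ia_nn: "ia a \<ge> 0" for a by (simp add: ia_def)
    have Ia_eq: "Ia a = ennreal (ia a)" if "a \<in> {0,1}" for a using Iafin[OF that] by (simp add: ia_def less_top)
    have qS: "prob (S a) > 0" if "a \<in> {0,1}" for a using that q0p q1p by (auto simp: q0_def q1_def)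
    have Ea_eq: "Ea a = ennreal (ia a / prob (S a))" if "a \<in> {0,1}" for a
    proof -
      have "Ea a = Ia a / emeasure M (S a)" unfolding Ea_def Ma_def Ia_def by (rule nn_integral_uniform_measure) measurable
      also have "\<dots> = ennreal (ia a) / ennreal (prob (S a))" using Ia_eq[OF that] by (simp add: emeasure_eq_measure)
      also have "\<dots> = ennreal (ia a / prob (S a))" using qS[OF that] ia_nn by (intro divide_ennreal) auto
      finally show ?thesis .
    qed
    define e0 where "e0 = ia 0 / q0"
    define e1 where "e1 = ia 1 / q1"
    have e0n: "e0 \<ge> 0" and e1n: "e1 \<ge> 0" using q0p q1p ia_nn by (auto simp: e0_def e1_def)
    have E0: "Ea 0 = ennreal e0" and E1: "Ea 1 = ennreal e1" using Ea_eq by (auto simp: e0_def e1_def q0_def q1_def)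
    define K where "K = (1/2::real) powr (1-p)"
    have Kn: "K \<ge> 0" unfolding K_def by simp
    have Cb: "C \<le> ennreal (K * ((1-t) powr (1-p) * (e0 + e1) + 2*t))" if t: "0 < t" "t < 1" for t
    proof -
      have Ln: "(1-t) powr (1-p) \<ge> 0" by simp
      have "C \<le> ennreal K * (ennreal ((1-t) powr (1-p)) * Ea 0 + ennreal t) + ennreal K * (ennreal ((1-t) powr (1-p)) * Ea 1 + ennreal t)"
        using bound[OF t] unfolding K_def .
      also have "\<dots> = ennreal (K * ((1-t) powr (1-p) * e0 + t)) + ennreal (K * ((1-t) powr (1-p) * e1 + t))"
        unfolding E0 E1 using Kn Ln e0n e1n t by (simp add: t3)
      also have "\<dots> = ennreal (K * ((1-t) powr (1-p) * e0 + t) + K * ((1-t) powr (1-p) * e1 + t))"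
        using Kn Ln e0n e1n t by (intro ennreal_plus[symmetric]) auto
      also have "\<dots> = ennreal (K * ((1-t) powr (1-p) * (e0 + e1) + 2*t))"
        by (rule arg_cong[where f=ennreal]) (simp add: algebra_simps)
      finally show ?thesis .
    qed
    have "C \<le> ennreal (K * ((1-1/2) powr (1-p) * (e0 + e1) + 2*(1/2)))" by (rule Cb) simp_all
    from le_less_trans[OF this ennreal_less_top] have Cfin: "C < \<infinity>" by simp
    define r where "r = enn2real C"
    have Ceq: "C = ennreal r" unfolding r_def using Cfin by simp
    have rn: "r \<ge> 0" unfolding r_def by simp
    have rb: "r \<le> K * ((1-t) powr (1-p) * (e0 + e1) + 2*t)" if "0 < t" "t < 1" for t
    proof -
      have "ennreal r \<le> ennreal (K * ((1-t) powr (1-p) * (e0 + e1) + 2*t))" using Cb[OF that] Ceq by simp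
      moreover have "K * ((1-t) powr (1-p) * (e0 + e1) + 2*t) \<ge> 0" using Kn e0n e1n that by simp
      ultimately show ?thesis by (simp add: ennreal_le_iff)
    qed
    have lim: "((\<lambda>t. K * ((1-t) powr (1-p) * (e0 + e1) + 2*t)) \<longlongrightarrow> K * ((1-0) powr (1-p) * (e0 + e1) + 2*0)) (at_right 0)"
      by (intro tendsto_intros) auto
    have rK: "r \<le> K * (e0 + e1)"
    proof -
      have "r \<le> K * ((1-0) powr (1-p) * (e0 + e1) + 2*0)"
      proof (rule tendsto_lowerbound[OF lim])
        show "\<forall>\<^sub>F t in at_right 0. r \<le> K * ((1-t) powr (1-p) * (e0 + e1) + 2*t)"
          by (rule eventually_at_rightI[of 0 1]) (auto intro: rb)
      qed simp
      then show ?thesis by simp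
    qed
    have a0: "H * e0 \<le> ia 0"
    proof -
      have "H * e0 \<le> q0 * e0" using H0 e0n by (rule mult_right_mono)
      also have "q0 * e0 = ia 0" using q0p by (simp add: e0_def)
      finally show ?thesis .
    qed
    have a1: "H * e1 \<le> ia 1"
    proof -
      have "H * e1 \<le> q1 * e1" using H1 e1n by (rule mult_right_mono)
      also have "q1 * e1 = ia 1" using q1p by (simp add: e1_def)
      finally show ?thesis .
    qed
    have key: "H powr p * r \<le> ia 0 + ia 1"
    proof -
      have hp: "H powr p \<ge> 0" by simp
      have "H powr p * r \<le> H powr p * (K * (e0 + e1))" using rK hp by (rule mult_left_mono)
      also have "\<dots> = (H powr p * K) * (e0 + e1)" by (simp only: mult.assoc)
      also have "\<dots> \<le> H * (e0 + e1)"
        using t1[OF Hpos H2 assms(11)] e0n e1n unfolding K_def by (intro mult_right_mono) auto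
      finally show ?thesis using a0 a1 by (simp add: distrib_left)
    qed
    have Ieq: "I = ennreal (ia 0 + ia 1)" using Isplit Ia_eq ia_nn by (simp add: ennreal_plus)
    have R1: "root_enn p C = ereal (r powr (1/p))" unfolding root_enn_def Ceq using rn by simp
    have s01: "ia 0 + ia 1 \<ge> 0" using ia_nn[of 0] ia_nn[of 1] by simp
    have Ie: "enn2real I = ia 0 + ia 1" unfolding Ieq using s01 by (rule enn2real_ennreal)
    have R2: "root_enn p I = ereal ((ia 0 + ia 1) powr (1/p))" unfolding root_enn_def using False Ie by simp
    have "H * r powr (1/p) = (H powr p) powr (1/p) * r powr (1/p)"
      using Hpos assms(11) by (simp add: powr_powr)
    also have "\<dots> = (H powr p * r) powr (1/p)" using Hpos rn by (simp add: powr_mult)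
    also have "\<dots> \<le> (ia 0 + ia 1) powr (1/p)" using key Hpos rn assms(11) by (intro powr_mono2) auto
    finally have fin: "H * r powr (1/p) \<le> (ia 0 + ia 1) powr (1/p)" .
    have "ereal H * root_enn p C \<le> root_enn p I" unfolding R1 R2 using fin by simp
    then show ?thesis unfolding lhs rhs H_def by simp
  qed
qed

end
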